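(* If $(T,X)$ is a uniformly left-syndetically stable compact flow ($T$ a Hausdorff topological group, $X$ compact Hausdorff), then $(T,X)$ is an a.p. flow.
   Context: $\mathscr U_X$ is the uniformity of $X$; for $A\subseteq T$ and $\delta\in\mathscr U_X$, $A\delta=\{(ax,ay):a\in A,(x,y)\in\delta\}$. $A\subseteq T$ is left-syndetic if there is a compact $K\subseteq T$ with $A\cap tK\neq\emptyset$ for all $t\in T$; $A$ is (right) syndetic if there is compact $K$ with $Kt\cap A\neq\emptyset$ for all $t$. $(T,X)$ is uniformly left-syndetically stable if for every $\varepsilon\in\mathscr U_X$ there exist $\delta\in\mathscr U_X$ and a left-syndetic $A\subseteq T$ with $A\delta\subseteq\varepsilon$. A flow is an a.p. flow if for every $\alpha\in\mathscr U_X$ there is a syndetic $A\subseteq T$ with $Ax\subseteq\alpha[x]$ for all $x\in X$. *)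

theory Defs
  imports "HOL-Analysis.Analysis"
begin

definition topological_group :: "('g::topological_space \<Rightarrow> 'g \<Rightarrow> 'g) \<Rightarrow> 'g \<Rightarrow> ('g \<Rightarrow> 'g) \<Rightarrow> bool" where
  "topological_group mul e ginv \<longleftrightarrow>
     group mul e ginv \<and>
     continuous_on UNIV (\<lambda>p. mul (fst p) (snd p)) \<and>
     continuous_on UNIV ginv"

definition is_flow :: "('g::topological_space \<Rightarrow> 'g \<Rightarrow> 'g) \<Rightarrow> 'g \<Rightarrow> ('g \<Rightarrow> 'x::topological_space \<Rightarrow> 'x) \<Rightarrow> bool" where
  "is_flow mul e act \<longleftrightarrow>
     continuous_on UNIV (\<lambda>p. act (fst p) (snd p)) \<and>
     (\<forall>x. act e x = x) \<and>
     (\<forall>s t x. act (mul s t) x = act s (act t x))"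

definition entourage :: "('x::uniform_space \<times> 'x) set \<Rightarrow> bool" where
  "entourage E \<longleftrightarrow> eventually (\<lambda>p. p \<in> E) uniformity"

definition act_rel :: "('g \<Rightarrow> 'x \<Rightarrow> 'x) \<Rightarrow> 'g set \<Rightarrow> ('x \<times> 'x) set \<Rightarrow> ('x \<times> 'x) set" where
  "act_rel act A \<delta> = {(act a x, act a y) | a x y. a \<in> A \<and> (x, y) \<in> \<delta>}"

definition left_syndetic :: "('g::topological_space \<Rightarrow> 'g \<Rightarrow> 'g) \<Rightarrow> 'g set \<Rightarrow> bool" where
  "left_syndetic mul A \<longleftrightarrow> (\<exists>K. compact K \<and> (\<forall>t. A \<inter> (mul t ` K) \<noteq> {}))"

definition syndetic :: "('g::topological_space \<Rightarrow> 'g \<Rightarrow> 'g) \<Rightarrow> 'g set \<Rightarrow> bool" where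
  "syndetic mul A \<longleftrightarrow> (\<exists>K. compact K \<and> (\<forall>t. ((\<lambda>k. mul k t) ` K) \<inter> A \<noteq> {}))"

definition unif_left_synd_stable :: "('g::topological_space \<Rightarrow> 'g \<Rightarrow> 'g) \<Rightarrow> ('g \<Rightarrow> 'x::uniform_space \<Rightarrow> 'x) \<Rightarrow> bool" where
  "unif_left_synd_stable mul act \<longleftrightarrow>
     (\<forall>\<epsilon>. entourage \<epsilon> \<longrightarrow>
        (\<exists>\<delta> A. entourage \<delta> \<and> left_syndetic mul A \<and> act_rel act A \<delta> \<subseteq> \<epsilon>))"

definition ap_flow :: "('g::topological_space \<Rightarrow> 'g \<Rightarrow> 'g) \<Rightarrow> ('g \<Rightarrow> 'x::uniform_space \<Rightarrow> 'x) \<Rightarrow> bool" where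
  "ap_flow mul act \<longleftrightarrow>
     (\<forall>\<alpha>. entourage \<alpha> \<longrightarrow>
        (\<exists>A. syndetic mul A \<and> (\<forall>x. \<forall>a\<in>A. act a x \<in> {y. (x, y) \<in> \<alpha>})))"

end

theory Submission
  imports Defs
begin

lemma equicont_compact:
  fixes f :: "'g::topological_space \<Rightarrow> 'x::uniform_space \<Rightarrow> 'x"
  assumes cont: "continuous_on UNIV (\<lambda>p. f (fst p) (snd p))"
    and X: "compact (UNIV::'x set)" and K: "compact K"
    and E: "eventually E uniformity"
  shows "\<exists>D. eventually D uniformity \<and> (\<forall>k\<in>K. \<forall>x y. D (x,y) \<longrightarrow> E (f k x, f k y))"
proof -
  obtain E1 where E1: "eventually E1 uniformity"
    and E1t: "\<And>a b c. E1 (a,b) \<Longrightarrow> E1 (b,c) \<Longrightarrow> E (a,c)"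
    using uniformity_transE[OF E] by blast
  define E2 where "E2 = (\<lambda>(a,b). E1 (a,b) \<and> E1 (b,a))"
  have E2ev: "eventually E2 uniformity"
    unfolding E2_def using eventually_conj[OF E1 uniformity_sym[OF E1]]
    by (simp add: case_prod_unfold)
  have E2t: "\<And>a b c. E2 (a,b) \<Longrightarrow> E2 (a,c) \<Longrightarrow> E (b,c)"
    unfolding E2_def using E1t by auto
  define g where "g = (\<lambda>p. f (fst p) (snd p))"
  have loc: "\<exists>U V D. open U \<and> fst p \<in> U \<and> open V \<and> snd p \<in> V \<and> eventually D uniformity \<and>
     (\<forall>k'\<in>U. \<forall>x'\<in>V. \<forall>y'. D (x',y') \<longrightarrow> E2 (g p, f k' x') \<and> E2 (g p, f k' y'))" for p
  proof -
    obtain k x where p: "p = (k,x)" by (cases p)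
    have lim: "filterlim g (nhds (g p)) (at p within UNIV)"
      using cont unfolding g_def continuous_on_def by (cases p) auto
    have "eventually (\<lambda>z. E2 (g p, z)) (nhds (g p))"
      unfolding eventually_nhds_uniformity using E2ev by (auto elim: eventually_mono)
    with lim have "eventually (\<lambda>q. E2 (g p, g q)) (at p within UNIV)"
      unfolding filterlim_iff by blast
    then have ev1: "eventually (\<lambda>q. q \<noteq> p \<longrightarrow> E2 (g p, g q)) (nhds p)"
      by (simp add: eventually_at_filter)
    have "E2 (g p, g p)" using uniformity_refl[OF E2ev] .
    with ev1 have "eventually (\<lambda>q. E2 (g p, g q)) (nhds p)"
      by (auto elim: eventually_mono)
    then have "eventually (\<lambda>q. E2 (g p, f (fst q) (snd q))) (nhds k \<times>\<^sub>F nhds x)"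
      by (simp add: p nhds_prod g_def)
    then obtain Pf Pg where Pf: "eventually Pf (nhds k)" and Pg: "eventually Pg (nhds x)"
      and PP: "\<And>k' y. Pf k' \<Longrightarrow> Pg y \<Longrightarrow> E2 (g p, f k' y)"
      unfolding eventually_prod_filter by auto
    from Pg have R: "eventually (\<lambda>(x', y). x' = x \<longrightarrow> Pg y) uniformity"
      by (simp add: eventually_nhds_uniformity)
    obtain D where D: "eventually D uniformity"
      and Dt: "\<And>a b c. D (a,b) \<Longrightarrow> D (b,c) \<Longrightarrow> (\<lambda>(x', y). x' = x \<longrightarrow> Pg y) (a,c)"
      using uniformity_transE[OF R] by blast
    have "eventually (\<lambda>y. D (x,y)) (nhds x)"
      unfolding eventually_nhds_uniformity using D by (auto elim: eventually_mono)
    then obtain V where V: "open V" "x \<in> V" "\<And>y. y \<in> V \<Longrightarrow> D (x,y)"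
      unfolding eventually_nhds by blast
    from Pf obtain U where U: "open U" "k \<in> U" "\<And>y. y \<in> U \<Longrightarrow> Pf y"
      unfolding eventually_nhds by blast
    show ?thesis
    proof (intro exI conjI ballI allI impI)
      show "open U" "fst p \<in> U" "open V" "snd p \<in> V" "eventually D uniformity"
        using U V D p by auto
    next
      fix k' x' y' assume k': "k' \<in> U" and x': "x' \<in> V" and d: "D (x',y')"
      have "D (x,x')" using V x' by auto
      moreover have "D (x',x')" using uniformity_refl[OF D] .
      ultimately have "Pg x'" "Pg y'" using Dt d by fastforce+
      then show "E2 (g p, f k' x')" "E2 (g p, f k' y')" using PP U k' by auto
    qed
  qed
  then obtain U V D where UVD: "\<And>p. open (U p) \<and> fst p \<in> U p \<and> open (V p) \<and> snd p \<in> V p \<and>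
      eventually (D p) uniformity \<and>
     (\<forall>k'\<in>U p. \<forall>x'\<in>V p. \<forall>y'. D p (x',y') \<longrightarrow> E2 (g p, f k' x') \<and> E2 (g p, f k' y'))"
    by metis
  have "compact (K \<times> (UNIV::'x set))" using K X by (rule compact_Times)
  then obtain C' where C': "C' \<subseteq> K \<times> UNIV" "finite C'" "K \<times> UNIV \<subseteq> (\<Union>c\<in>C'. U c \<times> V c)"
  proof (rule compactE_image[where C="K \<times> UNIV" and f="\<lambda>p. U p \<times> V p"])
    show "\<And>T. T \<in> K \<times> UNIV \<Longrightarrow> open (U T \<times> V T)" using UVD by (simp add: open_Times)
    show "K \<times> UNIV \<subseteq> (\<Union>c\<in>K \<times> UNIV. U c \<times> V c)"
    proof
      fix q assume "q \<in> K \<times> (UNIV::'x set)"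
      then show "q \<in> (\<Union>c\<in>K \<times> UNIV. U c \<times> V c)" using UVD[of q] by (cases q) force
    qed
  qed blast
  define D0 where "D0 = (\<lambda>q. \<forall>p\<in>C'. D p q)"
  have "eventually D0 uniformity"
    unfolding D0_def using C'(2) UVD by (simp add: eventually_ball_finite)
  moreover have "\<forall>k\<in>K. \<forall>x y. D0 (x,y) \<longrightarrow> E (f k x, f k y)"
  proof (intro ballI allI impI)
    fix k x y assume k: "k \<in> K" and d: "D0 (x,y)"
    then obtain p where p: "p \<in> C'" "(k,x) \<in> U p \<times> V p" using C'(3) by blast
    then have "E2 (g p, f k x) \<and> E2 (g p, f k y)" using UVD[of p] d D0_def by auto
    then show "E (f k x, f k y)" using E2t by blast
  qed
  ultimately show ?thesis by blast
qed

lemma finite_cover: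
  assumes X: "compact (UNIV::'x::uniform_space set)" and R: "eventually R uniformity"
  shows "\<exists>P. finite P \<and> (\<forall>x::'x. \<exists>p\<in>P. R (p,x))"
proof -
  have "\<exists>W. open W \<and> p \<in> W \<and> (\<forall>y\<in>W. R (p,y))" for p :: 'x
  proof -
    have "eventually (\<lambda>y. R (p,y)) (nhds p)"
      unfolding eventually_nhds_uniformity using R by (auto elim: eventually_mono)
    then show ?thesis unfolding eventually_nhds by blast
  qed
  then have "\<forall>p. \<exists>W. open W \<and> p \<in> W \<and> (\<forall>y\<in>W. R (p,y))" by blast
  from choice[OF this] obtain W where W: "\<forall>p. open (W p) \<and> p \<in> W p \<and> (\<forall>y\<in>W p. R (p,y))"
    by blast
  have opn: "\<And>T. T \<in> UNIV \<Longrightarrow> open (W T)" using W by blast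
  have cov: "UNIV \<subseteq> (\<Union>c\<in>UNIV. W c)" using W by blast
  obtain C' where C': "C' \<subseteq> UNIV" "finite C'" "UNIV \<subseteq> (\<Union>c\<in>C'. W c)"
    by (rule compactE_image[OF X opn cov])
  show ?thesis
  proof (intro exI conjI allI)
    show "finite C'" by (rule C'(2))
    fix x :: 'x
    from C'(3) obtain p where "p \<in> C'" "x \<in> W p" by blast
    then show "\<exists>p\<in>C'. R (p,x)" using W by blast
  qed
qed

lemma totally_bdd:
  fixes f :: "'s \<Rightarrow> 'x::uniform_space \<Rightarrow> 'x"
  assumes X: "compact (UNIV::'x set)"
    and equi: "\<And>E. eventually E uniformity \<Longrightarrow>
        \<exists>D. eventually D uniformity \<and> (\<forall>s x y. D (x,y) \<longrightarrow> E (f s x, f s y))"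
    and B: "eventually B uniformity"
  shows "\<exists>S0. finite S0 \<and> (\<forall>s. \<exists>t\<in>S0. \<forall>x. B (f s x, f t x))"
proof -
  obtain B1 where B1: "eventually B1 uniformity"
    and B1t: "\<And>a b c. B1 (a,b) \<Longrightarrow> B1 (b,c) \<Longrightarrow> B (a,c)"
    using uniformity_transE[OF B] by blast
  obtain B2 where B2: "eventually B2 uniformity"
    and B2t: "\<And>a b c. B2 (a,b) \<Longrightarrow> B2 (b,c) \<Longrightarrow> B1 (a,c)"
    using uniformity_transE[OF B1] by blast
  define G where "G = (\<lambda>(a,b). B2 (a,b) \<and> B2 (b,a))"
  have Gev: "eventually G uniformity"
    unfolding G_def using eventually_conj[OF B2 uniformity_sym[OF B2]]
    by (simp add: case_prod_unfold)
  obtain D where D: "eventually D uniformity" and DG: "\<And>s x y. D (x,y) \<Longrightarrow> G (f s x, f s y)"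
    using equi[OF Gev] by blast
  obtain P where P: "finite P" "\<And>x. \<exists>p\<in>P. D (p,x)" using finite_cover[OF X D] by blast
  obtain Q where Q: "finite Q" "\<And>x. \<exists>q\<in>Q. G (q,x)" using finite_cover[OF X Gev] by blast
  define c where "c = (\<lambda>s. \<lambda>p\<in>P. SOME q. q \<in> Q \<and> G (q, f s p))"
  have cQ: "c s p \<in> Q \<and> G (c s p, f s p)" if "p \<in> P" for s p
  proof -
    have "\<exists>q. q \<in> Q \<and> G (q, f s p)" using Q(2)[of "f s p"] by blast
    from someI_ex[OF this] show ?thesis unfolding c_def using that by simp
  qed
  have "range c \<subseteq> PiE P (\<lambda>_. Q)"
  proof
    fix \<phi> assume "\<phi> \<in> range c"
    then obtain s where s: "\<phi> = c s" by blast
    show "\<phi> \<in> PiE P (\<lambda>_. Q)" unfolding PiE_iff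
    proof
      show "\<forall>i\<in>P. \<phi> i \<in> Q" using cQ s by blast
      show "\<phi> \<in> extensional P" unfolding s c_def by (rule restrict_extensional)
    qed
  qed
  then have fin: "finite (range c)" using finite_PiE[OF P(1) , of "\<lambda>_. Q"] Q(1)
    by (meson finite_subset)
  define S0 where "S0 = (\<lambda>\<phi>. SOME s. c s = \<phi>) ` range c"
  have "finite S0" unfolding S0_def using fin by simp
  moreover have "\<forall>s. \<exists>t\<in>S0. \<forall>x. B (f s x, f t x)"
  proof
    fix s
    define t where "t = (SOME s'. c s' = c s)"
    have ct: "c t = c s" unfolding t_def by (rule someI[of "\<lambda>s'. c s' = c s" s]) simp
    have "t \<in> S0" unfolding S0_def t_def by simp
    moreover have "B (f s x, f t x)" for x
    proof -
      obtain p where p: "p \<in> P" "D (p,x)" using P(2) by blast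
      have 1: "G (c s p, f s p)" "G (c s p, f t p)" using cQ[OF p(1), of s] cQ[OF p(1), of t] ct by auto
      have 2: "G (f s p, f s x)" "G (f t p, f t x)" using DG p(2) by auto
      have g1: "B2 (f s p, c s p)" "B2 (c s p, f t p)" using 1 unfolding G_def by simp_all
      have g2: "B2 (f s x, f s p)" "B2 (f t p, f t x)" using 2 unfolding G_def by simp_all
      have "B1 (f s x, c s p)" using B2t[OF g2(1) g1(1)] .
      moreover have "B1 (c s p, f t x)" using B2t[OF g1(2) g2(2)] .
      ultimately show ?thesis using B1t by blast
    qed
    ultimately show "\<exists>t\<in>S0. \<forall>x. B (f s x, f t x)" by blast
  qed
  ultimately show ?thesis by blast
qed

theorem corollary2:
  fixes mul :: "'g::t2_space \<Rightarrow> 'g \<Rightarrow> 'g" and e :: 'g and ginv :: "'g \<Rightarrow> 'g"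
    and act :: "'g \<Rightarrow> 'x::{uniform_space, t2_space} \<Rightarrow> 'x"
  assumes "topological_group mul e ginv"
    and "compact (UNIV :: 'x set)"
    and "is_flow mul e act"
    and "unif_left_synd_stable mul act"
  shows "ap_flow mul act"
proof -
  have grp: "group mul e ginv" and ginvc: "continuous_on UNIV ginv"
    using assms(1) unfolding topological_group_def by auto
  interpret G: group mul e ginv by (rule grp)
  have cont: "continuous_on UNIV (\<lambda>p. act (fst p) (snd p))" and ide: "\<And>x. act e x = x"
    and comp: "\<And>s t x. act (mul s t) x = act s (act t x)"
    using assms(3) unfolding is_flow_def by auto
  have equi: "\<exists>D. eventually D uniformity \<and> (\<forall>s x y. D (x,y) \<longrightarrow> E (act s x, act s y))"
    if E: "eventually E uniformity" for E
  proof -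
    have "entourage {p. E p}" using E unfolding entourage_def by simp
    then obtain \<delta> A where \<delta>: "entourage \<delta>" and A: "left_syndetic mul A"
      and sub: "act_rel act A \<delta> \<subseteq> {p. E p}"
      using assms(4) unfolding unif_left_synd_stable_def by blast
    obtain K where K: "compact K" "\<And>t. A \<inter> mul t ` K \<noteq> {}"
      using A unfolding left_syndetic_def by blast
    have K': "compact (ginv ` K)"
      using compact_continuous_image[OF continuous_on_subset[OF ginvc] K(1)] by simp
    obtain D where D: "eventually D uniformity"
      and DK: "\<forall>k\<in>ginv ` K. \<forall>x y. D (x,y) \<longrightarrow> (\<lambda>p. p \<in> \<delta>) (act k x, act k y)"
      using equicont_compact[OF cont assms(2) K', of "\<lambda>p. p \<in> \<delta>"] \<delta>
      unfolding entourage_def by blast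
    have "\<forall>s x y. D (x,y) \<longrightarrow> E (act s x, act s y)"
    proof (intro allI impI)
      fix s x y assume d: "D (x,y)"
      obtain k where k: "k \<in> K" "mul s k \<in> A" using K(2)[of s] by blast
      have "(act (ginv k) x, act (ginv k) y) \<in> \<delta>" using DK k d by auto
      then have "(act (mul s k) (act (ginv k) x), act (mul s k) (act (ginv k) y)) \<in> act_rel act A \<delta>"
        unfolding act_rel_def using k by blast
      moreover have "act (mul s k) (act (ginv k) z) = act s z" for z
      proof -
        have "act (mul s k) (act (ginv k) z) = act (mul (mul s k) (ginv k)) z" by (rule comp[symmetric])
        also have "mul (mul s k) (ginv k) = s" by (simp add: G.assoc)
        finally show ?thesis .
      qed
      ultimately have "(act s x, act s y) \<in> act_rel act A \<delta>" by simp
      then show "E (act s x, act s y)" using sub by auto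
    qed
    then show ?thesis using D by blast
  qed
  show ?thesis unfolding ap_flow_def
  proof (intro allI impI)
    fix \<alpha> :: "('x \<times> 'x) set" assume "entourage \<alpha>"
    then have al: "eventually (\<lambda>p. p \<in> \<alpha>) uniformity" unfolding entourage_def .
    obtain S0 where S0: "finite S0" "\<And>s. \<exists>t\<in>S0. \<forall>x. (act s x, act t x) \<in> \<alpha>"
      using totally_bdd[where f=act, OF assms(2) equi al] by blast
    define A where "A = {a. \<forall>x. (x, act a x) \<in> \<alpha>}"
    have "syndetic mul A" unfolding syndetic_def
    proof (intro exI conjI allI)
      show "compact S0" using S0(1) by (rule finite_imp_compact)
      fix t
      obtain u where u: "u \<in> S0" "\<And>x. (act (ginv t) x, act u x) \<in> \<alpha>" using S0(2)[of "ginv t"] by blast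
      have "(x, act (mul u t) x) \<in> \<alpha>" for x
        using u(2)[of "act t x"] comp[of "ginv t" t x] comp[of u t x] ide by simp
      then have "mul u t \<in> A" unfolding A_def by blast
      then show "(\<lambda>k. mul k t) ` S0 \<inter> A \<noteq> {}" using u(1) by blast
    qed
    moreover have "\<forall>x. \<forall>a\<in>A. act a x \<in> {y. (x, y) \<in> \<alpha>}" unfolding A_def by blast
    ultimately show "\<exists>A. syndetic mul A \<and> (\<forall>x. \<forall>a\<in>A. act a x \<in> {y. (x, y) \<in> \<alpha>})" by blast
  qed
qed

end
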